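(* Assume $\alpha\neq1$ and $\mu\neq0$. Fix $k\ge1$, let $w_j=1$ and $t_j=j$ for $j=1,\dots,k$ (and $t_0=0$), and choose $a_j=\exp(\mu_j)$ for $j=1,\dots,k-1$, where $\mu_j$ is the location parameter of $\log Z_j^*$ (determined by $a_{j+1},\dots,a_{k-1}$ through the backward recursion). Then $Z_0^*\le P^*$ almost surely and $\log Z_0^*\sim\mathcal S(\alpha,-\beta,\sigma_0,\mu_0)$ with $$\mu_0=-\mu+\log\frac{e^{-\mu k}-1}{e^{-\mu}-1},\qquad \sigma_0^\alpha=\sigma^\alpha\left(1+\sum_{j=1}^{k-1}\left(1-\frac{e^{-\mu j}-1}{e^{-\mu k}-1}\right)^\alpha\right).$$
   Context: Stable laws: for $\alpha^*\in(0,2]$, $\beta^*\in[-1,1]$, $\sigma^*>0$, $\mu^*\in\mathbb R$, write $Z\sim\mathcal S(\alpha^*,\beta^*,\sigma^*,\mu^* )$ if the real random variable $Z$ has characteristic function $\mathbb E e^{i\theta Z}=\exp\{i\theta\mu^*-|\sigma^*\theta|^{\alpha^*}(1-i\beta^*\operatorname{sgn}(\theta)\tan\frac{\pi\alpha^*}{2})\}$ when $\alpha^*\neq1$, and $\mathbb E e^{i\theta Z}=\exp\{i\theta\mu^*-|\sigma^*\theta|(1+i\beta^*\frac{2}{\pi}\operatorname{sgn}(\theta)\log|\theta|)\}$ when $\alpha^*=1$. Wealth process: on a probability space $(\Omega,\mathcal F,\mathbb P)$, $X:[0,\infty)\times\Omega\to(0,\infty)$ is a process such that $\log X$ is a Lévy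 process (càdlàg paths, independent increments) with, for all $0\le s<t$, $\log\frac{X(t)}{X(s)}\sim\mathcal S(\alpha,\beta,\sigma(t-s)^{1/\alpha},\mu(t-s))$, where $\alpha\in(0,2]$, $\beta\in[-1,1]$, $\sigma>0$, $\mu\in\mathbb R$ are fixed. Set $X_j=X(t_j)/X(t_{j-1})$ for $j\ge1$. Required initial investment: for withdrawals $w_1,\dots,w_k>0$ at times $t_1<\dots<t_k$, $W_{k-1}^*=w_kX_k^{-1}$ and $W_{j-1}^*=X_j^{-1}(W_j^*+w_j)$ for $j=k-1,\dots,1$; set $P^*=W_0^*$. Lower bound: for constants $a_1,\dots,a_{k-1}>0$, with $b_j=\frac{a_j}{a_j+w_j}$, set $Z_{k-1}^*=W_{k-1}^*$ and $Z_{j-1}^*=X_j^{-1}(a_j+w_j)\left(\frac{Z_j^*}{a_j}\right)^{b_j}$ for $j=k-1,\dots,1$. *)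

theory Defs
  imports "HOL-Probability.Probability"
begin

definition stable_cf :: "real \<Rightarrow> real \<Rightarrow> real \<Rightarrow> real \<Rightarrow> real \<Rightarrow> complex" where
  "stable_cf \<alpha> \<beta> \<sigma> \<mu> \<theta> =
     (if \<alpha> \<noteq> 1 then
        exp (\<i> * of_real (\<theta> * \<mu>) - of_real (\<bar>\<sigma> * \<theta>\<bar> powr \<alpha>)
               * (1 - \<i> * of_real (\<beta> * sgn \<theta> * tan (pi * \<alpha> / 2))))
      else
        exp (\<i> * of_real (\<theta> * \<mu>) - of_real \<bar>\<sigma> * \<theta>\<bar>
               * (1 + \<i> * of_real (\<beta> * (2 / pi) * sgn \<theta> * ln \<bar>\<theta>\<bar>))))"

definition has_stable_law ::
  "'a measure \<Rightarrow> ('a \<Rightarrow> real) \<Rightarrow> real \<Rightarrow> real \<Rightarrow> real \<Rightarrow> real \<Rightarrow> bool" where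
  "has_stable_law M Z \<alpha> \<beta> \<sigma> \<mu> \<longleftrightarrow>
     0 < \<alpha> \<and> \<alpha> \<le> 2 \<and> -1 \<le> \<beta> \<and> \<beta> \<le> 1 \<and> 0 < \<sigma> \<and>
     Z \<in> borel_measurable M \<and>
     (\<forall>\<theta>. char (distr M borel Z) \<theta> = stable_cf \<alpha> \<beta> \<sigma> \<mu> \<theta>)"

definition stable_wealth_process ::
  "'a measure \<Rightarrow> (real \<Rightarrow> 'a \<Rightarrow> real) \<Rightarrow> real \<Rightarrow> real \<Rightarrow> real \<Rightarrow> real \<Rightarrow> bool" where
  "stable_wealth_process M X \<alpha> \<beta> \<sigma> \<mu> \<longleftrightarrow>
     prob_space M \<and>
     (\<forall>t\<ge>0. X t \<in> borel_measurable M) \<and>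
     (\<forall>t\<ge>0. \<forall>\<omega>\<in>space M. 0 < X t \<omega>) \<and>
     \<comment> \<open>cadlag paths of log X\<close>
     (\<forall>\<omega>\<in>space M. \<forall>t\<ge>0.
        ((\<lambda>s. ln (X s \<omega>)) \<longlongrightarrow> ln (X t \<omega>)) (at_right t) \<and>
        (0 < t \<longrightarrow> (\<exists>l. ((\<lambda>s. ln (X s \<omega>)) \<longlongrightarrow> l) (at_left t)))) \<and>
     \<comment> \<open>independent increments of log X\<close>
     (\<forall>(n::nat) (ts::nat \<Rightarrow> real).
        (\<forall>i\<le>n. 0 \<le> ts i) \<and> (\<forall>i<n. ts i < ts (Suc i)) \<longrightarrow>
        prob_space.indep_vars M (\<lambda>_. borel)
          (\<lambda>i \<omega>. ln (X (ts (Suc i)) \<omega>) - ln (X (ts i) \<omega>)) {..<n}) \<and>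
     \<comment> \<open>stable increments\<close>
     (\<forall>s t. 0 \<le> s \<and> s < t \<longrightarrow>
        has_stable_law M (\<lambda>\<omega>. ln (X t \<omega> / X s \<omega>)) \<alpha> \<beta> (\<sigma> * (t - s) powr (1 / \<alpha>)) (\<mu> * (t - s)))"

text \<open>Gross returns X_j = X(t_j)/X(t_{j-1}) (used for j \<ge> 1).\<close>
definition returns :: "(real \<Rightarrow> 'a \<Rightarrow> real) \<Rightarrow> (nat \<Rightarrow> real) \<Rightarrow> 'a \<Rightarrow> nat \<Rightarrow> real" where
  "returns X t \<omega> j = X (t j) \<omega> / X (t (j - 1)) \<omega>"

text \<open>Wrec k w x m = W^*_{k-1-m}, for m \<le> k-1; x j stands for X_j.\<close>
fun Wrec :: "nat \<Rightarrow> (nat \<Rightarrow> real) \<Rightarrow> (nat \<Rightarrow> real) \<Rightarrow> nat \<Rightarrow> real" where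
  "Wrec k w x 0 = w k / x k"
| "Wrec k w x (Suc m) = (Wrec k w x m + w (k - 1 - m)) / x (k - 1 - m)"

definition W_star :: "nat \<Rightarrow> (nat \<Rightarrow> real) \<Rightarrow> (nat \<Rightarrow> real) \<Rightarrow> nat \<Rightarrow> real" where
  "W_star k w x j = Wrec k w x (k - 1 - j)"

definition P_star :: "nat \<Rightarrow> (nat \<Rightarrow> real) \<Rightarrow> (nat \<Rightarrow> real) \<Rightarrow> real" where
  "P_star k w x = W_star k w x 0"

text \<open>Zrec k w a x m = Z^*_{k-1-m}, with b_j = a_j / (a_j + w_j).\<close>
fun Zrec :: "nat \<Rightarrow> (nat \<Rightarrow> real) \<Rightarrow> (nat \<Rightarrow> real) \<Rightarrow> (nat \<Rightarrow> real) \<Rightarrow> nat \<Rightarrow> real" where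
  "Zrec k w a x 0 = w k / x k"
| "Zrec k w a x (Suc m) =
     (let j = k - 1 - m in
        (a j + w j) * (Zrec k w a x m / a j) powr (a j / (a j + w j)) / x j)"

definition Z_star :: "nat \<Rightarrow> (nat \<Rightarrow> real) \<Rightarrow> (nat \<Rightarrow> real) \<Rightarrow> (nat \<Rightarrow> real) \<Rightarrow> nat \<Rightarrow> real" where
  "Z_star k w a x j = Zrec k w a x (k - 1 - j)"

end

theory Submission
  imports Defs
begin
lemma char_lin:
  assumes "prob_space M" "finite I" "prob_space.indep_vars M (\<lambda>_. borel) Y I"
  shows "char (distr M borel (\<lambda>\<omega>. d + (\<Sum>i\<in>I. c i * Y i \<omega>))) \<theta>
       = exp (\<i> * of_real (\<theta> * d)) * (\<Prod>i\<in>I. char (distr M borel (Y i)) (c i * \<theta>))"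
proof -
  interpret prob_space M by fact
  have meas: "\<And>i. i \<in> I \<Longrightarrow> Y i \<in> borel_measurable M"
    using assms(3) unfolding indep_vars_def by auto
  have ind2: "indep_vars (\<lambda>_. borel) (\<lambda>i \<omega>. c i * Y i \<omega>) I"
    using indep_vars_compose2[OF assms(3), where Y="\<lambda>i x. c i * x" and N="\<lambda>_. borel"] by auto
  have S: "char (distr M borel (\<lambda>\<omega>. \<Sum>i\<in>I. c i * Y i \<omega>)) \<theta> = (\<Prod>i\<in>I. char (distr M borel (\<lambda>\<omega>. c i * Y i \<omega>)) \<theta>)"
    by (rule char_distr_sum[OF ind2])
  have C: "char (distr M borel (\<lambda>\<omega>. c i * Y i \<omega>)) \<theta> = char (distr M borel (Y i)) (c i * \<theta>)" if "i \<in> I" for i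
    using meas[OF that] by (simp add: char_def integral_distr mult.assoc mult.left_commute)
  have Sm: "(\<lambda>\<omega>. \<Sum>i\<in>I. c i * Y i \<omega>) \<in> borel_measurable M" using meas by measurable
  have "char (distr M borel (\<lambda>\<omega>. d + (\<Sum>i\<in>I. c i * Y i \<omega>))) \<theta>
      = (CLINT \<omega>|M. exp (\<i> * of_real (\<theta> * d)) * iexp (\<theta> * (\<Sum>i\<in>I. c i * Y i \<omega>)))"
    using Sm by (simp add: char_def integral_distr distrib_left exp_add[symmetric] algebra_simps)
  also have "\<dots> = exp (\<i> * of_real (\<theta> * d)) * char (distr M borel (\<lambda>\<omega>. \<Sum>i\<in>I. c i * Y i \<omega>)) \<theta>"
    using Sm by (simp add: char_def integral_distr)
  finally show ?thesis using S C by simp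
qed

lemma stable_prod:
  assumes "\<alpha> \<noteq> 1" "0 < \<alpha>" "0 < \<sigma>" "finite I" "\<forall>i\<in>I. c i < 0"
    and S: "S = (\<Sum>i\<in>I. \<bar>c i\<bar> powr \<alpha>)" "0 < S"
  shows "exp (\<i> * of_real (\<theta> * d)) * (\<Prod>i\<in>I. stable_cf \<alpha> \<beta> \<sigma> \<mu> (c i * \<theta>))
       = stable_cf \<alpha> (-\<beta>) (\<sigma> * S powr (1/\<alpha>)) (d + \<mu> * (\<Sum>i\<in>I. c i)) \<theta>"
proof -
  define T where "T = \<bar>\<sigma> * \<theta>\<bar> powr \<alpha>"
  define tn where "tn = tan (pi * \<alpha> / 2)"
  define s where "s = sgn \<theta>"
  have tm: "\<i> * of_real (c i * \<theta> * \<mu>) - of_real (\<bar>\<sigma> * (c i * \<theta>)\<bar> powr \<alpha>)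
               * (1 - \<i> * of_real (\<beta> * sgn (c i * \<theta>) * tn))
        = \<i> * of_real \<theta> * of_real \<mu> * of_real (c i) - of_real (\<bar>c i\<bar> powr \<alpha>) * (of_real T * (1 + \<i> * of_real (\<beta> * s * tn)))"
    if "i \<in> I" for i
  proof -
    have ci: "c i < 0" using assms(5) that by auto
    have "\<bar>\<sigma> * (c i * \<theta>)\<bar> powr \<alpha> = \<bar>c i\<bar> powr \<alpha> * T"
      unfolding T_def by (simp add: abs_mult powr_mult[symmetric] mult.left_commute)
    moreover have "sgn (c i * \<theta>) = - s" using ci unfolding s_def by (simp add: sgn_mult)
    ultimately show ?thesis by (simp add: algebra_simps)
  qed
  have sc: "\<bar>\<sigma> * S powr (1/\<alpha>) * \<theta>\<bar> powr \<alpha> = S * T"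
    using assms S unfolding T_def
    by (simp add: abs_mult powr_mult powr_powr)
  have "exp (\<i> * of_real (\<theta> * d)) * (\<Prod>i\<in>I. stable_cf \<alpha> \<beta> \<sigma> \<mu> (c i * \<theta>))
      = exp (\<i> * of_real (\<theta> * d)) * exp (\<Sum>i\<in>I. \<i> * of_real \<theta> * of_real \<mu> * of_real (c i) - of_real (\<bar>c i\<bar> powr \<alpha>) * (of_real T * (1 + \<i> * of_real (\<beta> * s * tn))))"
  proof -
    have "stable_cf \<alpha> \<beta> \<sigma> \<mu> (c i * \<theta>) = exp (\<i> * of_real \<theta> * of_real \<mu> * of_real (c i) - of_real (\<bar>c i\<bar> powr \<alpha>) * (of_real T * (1 + \<i> * of_real (\<beta> * s * tn))))"
      if "i \<in> I" for i
      using assms(1) tm[OF that] unfolding stable_cf_def tn_def by (simp add: mult.commute mult.left_commute)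
    then show ?thesis using assms(4) by (simp add: exp_sum)
  qed
  also have "\<dots> = exp (\<i> * of_real (\<theta> * d) + (\<i> * of_real \<theta> * of_real \<mu> * of_real (\<Sum>i\<in>I. c i) - of_real S * (of_real T * (1 + \<i> * of_real (\<beta> * s * tn)))))"
    by (simp add: sum_subtractf sum_distrib_left sum_distrib_right S exp_add)
  also have "\<dots> = stable_cf \<alpha> (-\<beta>) (\<sigma> * S powr (1/\<alpha>)) (d + \<mu> * (\<Sum>i\<in>I. c i)) \<theta>"
    using assms(1) unfolding stable_cf_def sc tn_def[symmetric] s_def[symmetric]
    by (simp add: algebra_simps)
  finally show ?thesis .
qed
lemma small_zero:
  fixes D E \<alpha> :: real
  assumes "0 < \<alpha>" "\<alpha> \<noteq> 1"
    and H: "\<And>\<theta>. 0 < \<theta> \<Longrightarrow> \<exists>n::int. \<theta> * D + \<theta> powr \<alpha> * E = of_int (2 * n) * pi"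
  shows "D = 0"
proof -
  define t1 where "t1 = pi / (\<bar>D\<bar> + 1)"
  define t2 where "t2 = (pi / (\<bar>E\<bar> + 1)) powr (1/\<alpha>)"
  define t where "t = min t1 t2"
  have t1p: "0 < t1" unfolding t1_def by (simp add: add_pos_nonneg)
  have t2p: "0 < t2" unfolding t2_def by (simp add: add_pos_nonneg)
  have tp: "0 < t" using t1p t2p unfolding t_def by simp
  have z: "\<theta> * D + \<theta> powr \<alpha> * E = 0" if th: "0 < \<theta>" "\<theta> \<le> t" for \<theta>
  proof -
    obtain n :: int where n: "\<theta> * D + \<theta> powr \<alpha> * E = of_int (2 * n) * pi" using H[OF th(1)] by blast
    have a: "\<theta> * \<bar>D\<bar> < pi"
    proof -
      have "\<theta> * \<bar>D\<bar> \<le> t1 * \<bar>D\<bar>" using th unfolding t_def by (intro mult_right_mono) auto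
      also have "\<dots> < t1 * (\<bar>D\<bar> + 1)" using t1p by simp
      also have "\<dots> = pi" unfolding t1_def by (simp add: add_pos_nonneg)
      finally show ?thesis .
    qed
    have b: "\<theta> powr \<alpha> * \<bar>E\<bar> < pi"
    proof -
      have "\<theta> powr \<alpha> \<le> t2 powr \<alpha>" using th assms(1) unfolding t_def by (intro powr_mono2) auto
      also have "\<dots> = pi / (\<bar>E\<bar> + 1)" unfolding t2_def using assms(1)
        by (simp add: powr_powr add_pos_nonneg)
      finally have "\<theta> powr \<alpha> * \<bar>E\<bar> \<le> pi / (\<bar>E\<bar> + 1) * \<bar>E\<bar>" by (intro mult_right_mono) auto
      also have "\<dots> < pi" by (simp add: field_simps add_pos_nonneg)
      finally show ?thesis .
    qed
    have "\<bar>\<theta> * D + \<theta> powr \<alpha> * E\<bar> < 2 * pi"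
    proof -
      have "\<bar>\<theta> * D + \<theta> powr \<alpha> * E\<bar> \<le> \<theta> * \<bar>D\<bar> + \<theta> powr \<alpha> * \<bar>E\<bar>"
        using th by (simp add: abs_mult abs_triangle_ineq[THEN order_trans])
      then show ?thesis using a b by linarith
    qed
    then have "\<bar>real_of_int n\<bar> * (2 * pi) < 1 * (2 * pi)" using n by (simp add: abs_mult)
    then have "\<bar>real_of_int n\<bar> < 1" by (simp only: mult_less_cancel_right) (use pi_gt_zero in auto)
    then have "n = 0" by linarith
    then show ?thesis using n by simp
  qed
  have e1: "t * D + t powr \<alpha> * E = 0" using z[OF tp] by simp
  have e2: "(t/2) * D + (t/2) powr \<alpha> * E = 0" using z[of "t/2"] tp by simp
  have "(t/2) powr \<alpha> = t powr \<alpha> / 2 powr \<alpha>" using tp by (simp add: powr_divide)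
  with e2 have e2': "t * D + 2 * (t powr \<alpha> * E) / 2 powr \<alpha> = 0" by (simp add: field_simps)
  have "t powr \<alpha> * E * (1 - 2 / 2 powr \<alpha>) = (t * D + t powr \<alpha> * E) - (t * D + 2 * (t powr \<alpha> * E) / 2 powr \<alpha>)"
    by (simp add: algebra_simps)
  then have "t powr \<alpha> * E * (1 - 2 / 2 powr \<alpha>) = 0" using e1 e2' by simp
  moreover have "2 powr \<alpha> \<noteq> 2"
  proof
    assume "2 powr \<alpha> = 2"
    then have "2 powr \<alpha> = 2 powr (1::real)" by simp
    then have "\<alpha> = 1" using powr_inj[of 2 \<alpha> 1] by simp
    then show False using assms(2) by simp
  qed
  then have "1 - 2 / 2 powr \<alpha> \<noteq> 0" by (simp add: field_simps)
  ultimately have "E = 0" using tp by simp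
  then show ?thesis using e1 tp by simp
qed
lemma norm_stable_cf: "norm (stable_cf \<alpha> \<beta> \<sigma> \<mu> \<theta>) = exp (- (\<bar>\<sigma> * \<theta>\<bar> powr \<alpha>))"
  unfolding stable_cf_def by (cases "\<alpha> = 1") (auto simp: norm_exp_eq_Re)

lemma stable_loc_unique:
  assumes h1: "has_stable_law M Z \<alpha> \<beta> \<sigma> \<mu>" and h2: "has_stable_law M Z \<alpha>' \<beta>' \<sigma>' \<mu>'"
    and a1: "\<alpha> \<noteq> 1"
  shows "\<mu> = \<mu>'"
proof -
  have p: "0 < \<alpha>" "0 < \<sigma>" "0 < \<alpha>'" "0 < \<sigma>'" using h1 h2 unfolding has_stable_law_def by auto
  have eq: "stable_cf \<alpha> \<beta> \<sigma> \<mu> \<theta> = stable_cf \<alpha>' \<beta>' \<sigma>' \<mu>' \<theta>" for \<theta>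
    using h1 h2 unfolding has_stable_law_def by metis
  have re: "\<bar>\<sigma> * \<theta>\<bar> powr \<alpha> = \<bar>\<sigma>' * \<theta>\<bar> powr \<alpha>'" for \<theta>
    using arg_cong[OF eq[of \<theta>], of norm] unfolding norm_stable_cf by simp
  have r1: "\<sigma> powr \<alpha> = \<sigma>' powr \<alpha>'" using re[of 1] p by simp
  have r2: "2 powr \<alpha> * \<sigma> powr \<alpha> = 2 powr \<alpha>' * \<sigma>' powr \<alpha>'" using re[of 2] p
    by (simp add: powr_mult mult.commute)
  have "2 powr \<alpha> = 2 powr \<alpha>'" using r1 r2 p by simp
  then have aa: "\<alpha>' = \<alpha>" using powr_inj[of 2 \<alpha> \<alpha>'] by simp
  define tn where "tn = tan (pi * \<alpha> / 2)"
  have "\<exists>n::int. \<theta> * (\<mu> - \<mu>') + \<theta> powr \<alpha> * (\<sigma> powr \<alpha> * (\<beta> - \<beta>') * tn) = of_int (2 * n) * pi"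
    if th: "0 < \<theta>" for \<theta>
  proof -
    define z1 where "z1 = \<i> * of_real (\<theta> * \<mu>) - of_real (\<bar>\<sigma> * \<theta>\<bar> powr \<alpha>) * (1 - \<i> * of_real (\<beta> * sgn \<theta> * tn))"
    define z2 where "z2 = \<i> * of_real (\<theta> * \<mu>') - of_real (\<bar>\<sigma>' * \<theta>\<bar> powr \<alpha>) * (1 - \<i> * of_real (\<beta>' * sgn \<theta> * tn))"
    have "exp z1 = exp z2" using eq[of \<theta>] a1 aa unfolding stable_cf_def z1_def z2_def tn_def by simp
    then have "exp (z1 - z2) = 1" by (simp add: exp_diff)
    then obtain n :: int where n: "Im (z1 - z2) = of_int (2 * n) * pi" unfolding exp_eq_1 by blast
    have s1: "\<bar>\<sigma> * \<theta>\<bar> powr \<alpha> = \<sigma> powr \<alpha> * \<theta> powr \<alpha>" using p th by (simp add: abs_mult powr_mult)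
    have s2: "\<bar>\<sigma>' * \<theta>\<bar> powr \<alpha> = \<sigma> powr \<alpha> * \<theta> powr \<alpha>" using p th r1 aa by (simp add: abs_mult powr_mult)
    have "Im (z1 - z2) = \<theta> * (\<mu> - \<mu>') + \<theta> powr \<alpha> * (\<sigma> powr \<alpha> * (\<beta> - \<beta>') * tn)"
      unfolding z1_def z2_def s1 s2 using th by (simp add: algebra_simps)
    then show ?thesis using n by auto
  qed
  then have "\<mu> - \<mu>' = 0" by (intro small_zero[OF p(1) a1]) 
  then show ?thesis by simp
qed

lemma lin_law:
  assumes "prob_space M" "finite I" "I \<noteq> {}" "prob_space.indep_vars M (\<lambda>_. borel) Y I"
    and law: "\<And>i \<theta>. i \<in> I \<Longrightarrow> char (distr M borel (Y i)) \<theta> = stable_cf \<alpha> \<beta> \<sigma> \<mu> \<theta>"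
    and par: "0 < \<alpha>" "\<alpha> \<le> 2" "-1 \<le> \<beta>" "\<beta> \<le> 1" "0 < \<sigma>" "\<alpha> \<noteq> 1"
    and c: "\<forall>i\<in>I. c i < 0"
    and f: "\<forall>\<omega>\<in>space M. f \<omega> = d + (\<Sum>i\<in>I. c i * Y i \<omega>)"
  shows "has_stable_law M f \<alpha> (-\<beta>) (\<sigma> * (\<Sum>i\<in>I. \<bar>c i\<bar> powr \<alpha>) powr (1/\<alpha>)) (d + \<mu> * (\<Sum>i\<in>I. c i))"
proof -
  interpret prob_space M by fact
  define S where "S = (\<Sum>i\<in>I. \<bar>c i\<bar> powr \<alpha>)"
  have Sp: "0 < S" unfolding S_def using assms(2,3) c
    by (intro sum_pos) auto
  have meas: "\<And>i. i \<in> I \<Longrightarrow> Y i \<in> borel_measurable M"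
    using assms(4) unfolding indep_vars_def by auto
  have lm: "(\<lambda>\<omega>. d + (\<Sum>i\<in>I. c i * Y i \<omega>)) \<in> borel_measurable M" using meas by measurable
  have fm: "f \<in> borel_measurable M" using lm f by (subst measurable_cong[of _ f]) auto
  have dd: "distr M borel f = distr M borel (\<lambda>\<omega>. d + (\<Sum>i\<in>I. c i * Y i \<omega>))"
    using f by (intro distr_cong) auto
  have "char (distr M borel f) \<theta> = stable_cf \<alpha> (-\<beta>) (\<sigma> * S powr (1/\<alpha>)) (d + \<mu> * (\<Sum>i\<in>I. c i)) \<theta>" for \<theta>
  proof -
    have "char (distr M borel f) \<theta> = exp (\<i> * of_real (\<theta> * d)) * (\<Prod>i\<in>I. char (distr M borel (Y i)) (c i * \<theta>))"
      unfolding dd by (rule char_lin[OF assms(1,2,4)])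
    also have "\<dots> = exp (\<i> * of_real (\<theta> * d)) * (\<Prod>i\<in>I. stable_cf \<alpha> \<beta> \<sigma> \<mu> (c i * \<theta>))"
      using law by simp
    also have "\<dots> = stable_cf \<alpha> (-\<beta>) (\<sigma> * S powr (1/\<alpha>)) (d + \<mu> * (\<Sum>i\<in>I. c i)) \<theta>"
      by (rule stable_prod[OF par(6,1,5) assms(2) c S_def Sp])
    finally show ?thesis .
  qed
  then show ?thesis unfolding has_stable_law_def S_def[symmetric] using par fm Sp by auto
qed

fun geo :: "real \<Rightarrow> nat \<Rightarrow> real" where
  "geo q 0 = 0"
| "geo q (Suc n) = 1 + q * geo q n"

lemma geo_nonneg: "0 < q \<Longrightarrow> 0 \<le> geo q n"
  by (induction n) auto

lemma geo_pos: "0 < q \<Longrightarrow> 0 < n \<Longrightarrow> 0 < geo q n"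
  by (cases n) (auto simp: geo_nonneg add_pos_nonneg)

lemma geo_add: "geo q (a + b) = geo q a + q ^ a * geo q b"
  by (induction a) (auto simp: algebra_simps)

lemma geo_closed: "q \<noteq> 1 \<Longrightarrow> geo q n = (q ^ n - 1) / (q - 1)"
  by (induction n) (auto simp: field_simps)

lemma aux1: fixes q g p h :: real
  assumes "0 < g" "0 < 1 + q * g"
  shows "q * p * h / (1 + q * g) = q * g / (q * g + 1) * (p * h / g)"
proof -
  have "q * g / (q * g + 1) * (p * h / g) = (q * p * h) * (g / g) / (1 + q * g)" by (simp add: algebra_simps)
  then show ?thesis using assms by simp
qed

lemma div_cancel_aux: "(c::real) \<noteq> 0 \<Longrightarrow> (a / c) / (b / c) = a / b"
  by simp

lemma ZW:
  assumes x: "\<forall>j\<in>{1..k}. 0 < x j" and a: "\<forall>j\<in>{1..k-1}. 0 < a j" and m: "m < k"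
  shows "0 < Zrec k (\<lambda>_. 1) a x m \<and> Zrec k (\<lambda>_. 1) a x m \<le> Wrec k (\<lambda>_. 1) x m"
  using m
proof (induction m)
  case 0
  then show ?case using x by auto
next
  case (Suc m)
  define j where "j = k - 1 - m"
  have j: "1 \<le> j" "j \<le> k - 1" using Suc.prems unfolding j_def by auto
  have xj: "0 < x j" and aj: "0 < a j" using x a j by auto
  define Z where "Z = Zrec k (\<lambda>_. 1) a x m"
  define W where "W = Wrec k (\<lambda>_. 1) x m"
  define b where "b = a j / (a j + 1)"
  have IH: "0 < Z" "Z \<le> W" using Suc unfolding Z_def W_def by auto
  have bb: "0 < b" "b < 1" using aj unfolding b_def by auto
  have ZS: "Zrec k (\<lambda>_. 1) a x (Suc m) = (a j + 1) * (Z / a j) powr b / x j"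
    unfolding Z_def b_def j_def by (simp add: Let_def)
  have WS: "Wrec k (\<lambda>_. 1) x (Suc m) = (W + 1) / x j"
    unfolding W_def j_def by simp
  have y: "(Z / a j) powr b * 1 powr (1 - b) \<le> b * (Z / a j) + (1 - b) * 1"
    using bb IH aj by (intro Youngs_inequality_0) auto
  have "(a j + 1) * (Z / a j) powr b \<le> (a j + 1) * (b * (Z / a j) + (1 - b))"
    using y aj by (intro mult_left_mono) auto
  also have "\<dots> = Z + 1" unfolding b_def using aj by (simp add: field_simps)
  finally have "(a j + 1) * (Z / a j) powr b \<le> W + 1" using IH by simp
  then have le: "(a j + 1) * (Z / a j) powr b / x j \<le> (W + 1) / x j"
    using xj by (simp add: divide_right_mono)
  have "0 < (a j + 1) * (Z / a j) powr b / x j" using aj IH xj by simp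
  then show ?case using le ZS WS by simp
qed

lemma ln_step:
  assumes x: "0 < x j" and aj: "0 < a j" and Z: "0 < Zrec k (\<lambda>_. 1) a x m" and j: "j = k - 1 - m"
  shows "ln (Zrec k (\<lambda>_. 1) a x (Suc m)) = ln (a j + 1) + (a j / (a j + 1)) * (ln (Zrec k (\<lambda>_. 1) a x m) - ln (a j)) - ln (x j)"
proof -
  have "Zrec k (\<lambda>_. 1) a x (Suc m) = (a j + 1) * (Zrec k (\<lambda>_. 1) a x m / a j) powr (a j / (a j + 1)) / x j"
    using j by (simp add: Let_def)
  then show ?thesis using x aj Z by (simp add: ln_mult ln_div ln_powr)
qed

theorem theorem5:
  fixes M :: "'a measure" and X :: "real \<Rightarrow> 'a \<Rightarrow> real"
    and \<alpha> \<beta> \<sigma> \<mu> :: real and k :: nat and a :: "nat \<Rightarrow> real"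
  assumes par: "0 < \<alpha>" "\<alpha> \<le> 2" "-1 \<le> \<beta>" "\<beta> \<le> 1" "0 < \<sigma>"
    and proc: "stable_wealth_process M X \<alpha> \<beta> \<sigma> \<mu>"
    and "\<alpha> \<noteq> 1" and "\<mu> \<noteq> 0" and "1 \<le> k"
    and a_choice: "\<forall>j\<in>{1..k-1}. 0 < a j \<and>
        (\<exists>\<alpha>' \<beta>' \<sigma>'. has_stable_law M
           (\<lambda>\<omega>. ln (Z_star k (\<lambda>_. 1) a (returns X real \<omega>) j)) \<alpha>' \<beta>' \<sigma>' (ln (a j)))"
  shows "(AE \<omega> in M. Z_star k (\<lambda>_. 1) a (returns X real \<omega>) 0
                       \<le> P_star k (\<lambda>_. 1) (returns X real \<omega>))
     \<and> has_stable_law M (\<lambda>\<omega>. ln (Z_star k (\<lambda>_. 1) a (returns X real \<omega>) 0)) \<alpha> (-\<beta>)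
         ((\<sigma> powr \<alpha> * (1 + (\<Sum>j=1..k-1.
             (1 - (exp (-\<mu> * real j) - 1) / (exp (-\<mu> * real k) - 1)) powr \<alpha>))) powr (1 / \<alpha>))
         (-\<mu> + ln ((exp (-\<mu> * real k) - 1) / (exp (-\<mu>) - 1)))"
proof -
  note a1 = \<open>\<alpha> \<noteq> 1\<close> and mu0 = \<open>\<mu> \<noteq> 0\<close> and k1 = \<open>1 \<le> k\<close>
  have ps: "prob_space M" using proc unfolding stable_wealth_process_def by auto
  interpret prob_space M by fact
  have Xm: "\<And>t. 0 \<le> t \<Longrightarrow> X t \<in> borel_measurable M" using proc unfolding stable_wealth_process_def by auto
  have Xp: "\<And>t \<omega>. 0 \<le> t \<Longrightarrow> \<omega> \<in> space M \<Longrightarrow> 0 < X t \<omega>" using proc unfolding stable_wealth_process_def by auto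
  define Y where "Y = (\<lambda>i \<omega>. ln (X (real (Suc i)) \<omega>) - ln (X (real i) \<omega>))"
  have ind: "indep_vars (\<lambda>_. borel) Y {..<k}"
  proof -
    have "\<forall>(n::nat) (ts::nat \<Rightarrow> real). (\<forall>i\<le>n. 0 \<le> ts i) \<and> (\<forall>i<n. ts i < ts (Suc i)) \<longrightarrow>
        indep_vars (\<lambda>_. borel) (\<lambda>i \<omega>. ln (X (ts (Suc i)) \<omega>) - ln (X (ts i) \<omega>)) {..<n}"
      using proc unfolding stable_wealth_process_def by blast
    from this[rule_format, of k real] show ?thesis unfolding Y_def by simp
  qed
  have law: "char (distr M borel (Y i)) \<theta> = stable_cf \<alpha> \<beta> \<sigma> \<mu> \<theta>" for i \<theta>
  proof -
    have "has_stable_law M (\<lambda>\<omega>. ln (X (real (Suc i)) \<omega> / X (real i) \<omega>)) \<alpha> \<beta> (\<sigma> * (real (Suc i) - real i) powr (1 / \<alpha>)) (\<mu> * (real (Suc i) - real i))"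
    proof -
      have hs: "\<forall>s t. 0 \<le> s \<and> s < t \<longrightarrow> has_stable_law M (\<lambda>\<omega>. ln (X t \<omega> / X s \<omega>)) \<alpha> \<beta> (\<sigma> * (t - s) powr (1 / \<alpha>)) (\<mu> * (t - s))"
        using proc unfolding stable_wealth_process_def by blast
      show ?thesis using hs[rule_format, of "real i" "real (Suc i)"] by simp
    qed
    then have h: "char (distr M borel (\<lambda>\<omega>. ln (X (real (Suc i)) \<omega> / X (real i) \<omega>))) \<theta> = stable_cf \<alpha> \<beta> \<sigma> \<mu> \<theta>"
      unfolding has_stable_law_def by simp
    have "distr M borel (\<lambda>\<omega>. ln (X (real (Suc i)) \<omega> / X (real i) \<omega>)) = distr M borel (Y i)"
    proof (intro distr_cong refl)
      fix \<omega> assume w: "\<omega> \<in> space M"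
      have "0 < X (real i) \<omega>" "0 < X (real (Suc i)) \<omega>" using Xp w by auto
      then show "ln (X (real (Suc i)) \<omega> / X (real i) \<omega>) = Y i \<omega>" unfolding Y_def by (simp add: ln_div)
    qed
    then show ?thesis using h by simp
  qed
  define x where "x = (\<lambda>\<omega>. returns X real \<omega>)"
  have xp: "\<And>\<omega> j. \<omega> \<in> space M \<Longrightarrow> 0 < x \<omega> j" unfolding x_def returns_def using Xp by simp
  have lnx: "\<And>\<omega> j. \<omega> \<in> space M \<Longrightarrow> 1 \<le> j \<Longrightarrow> ln (x \<omega> j) = Y (j - 1) \<omega>"
  proof -
    fix \<omega> j assume w: "\<omega> \<in> space M" and j: "1 \<le> (j::nat)"
    have "0 < X (real j) \<omega>" "0 < X (real (j - 1)) \<omega>" using Xp w by auto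
    moreover have "Suc (j - 1) = j" using j by simp
    ultimately show "ln (x \<omega> j) = Y (j - 1) \<omega>" unfolding x_def returns_def Y_def by (simp add: ln_div)
  qed
  have apos: "\<forall>j\<in>{1..k-1}. 0 < a j" using a_choice by auto
  have ZWm: "\<And>\<omega> m. \<omega> \<in> space M \<Longrightarrow> m < k \<Longrightarrow> 0 < Zrec k (\<lambda>_. 1) a (x \<omega>) m \<and> Zrec k (\<lambda>_. 1) a (x \<omega>) m \<le> Wrec k (\<lambda>_. 1) (x \<omega>) m"
    using xp apos by (intro ZW) auto
  have part1: "AE \<omega> in M. Z_star k (\<lambda>_. 1) a (returns X real \<omega>) 0 \<le> P_star k (\<lambda>_. 1) (returns X real \<omega>)"
    using ZWm k1 unfolding Z_star_def P_star_def W_star_def x_def by (intro AE_I2) auto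
  define q where "q = exp (-\<mu>)"
  have q0: "0 < q" and q1: "q \<noteq> 1" unfolding q_def using mu0 by auto
  define A where "A = (\<lambda>j. q * geo q (k - j))"
  define Sc where "Sc = (\<lambda>j. \<Sum>i\<in>{j..<k}. (q ^ (i - j) * geo q (k - i) / geo q (k - j)) powr \<alpha>)"
  define P where "P = (\<lambda>m. \<exists>c d. (\<forall>i\<in>{k-1-m..<k}. c i < (0::real)) \<and>
        (\<forall>\<omega>\<in>space M. ln (Zrec k (\<lambda>_. 1) a (x \<omega>) m) = d + (\<Sum>i\<in>{k-1-m..<k}. c i * Y i \<omega>)) \<and>
        d + \<mu> * (\<Sum>i\<in>{k-1-m..<k}. c i) = ln (A (k-1-m)) \<and>
        (\<Sum>i\<in>{k-1-m..<k}. \<bar>c i\<bar> powr \<alpha>) = Sc (k-1-m))"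
  have lawP: "has_stable_law M (\<lambda>\<omega>. ln (Zrec k (\<lambda>_. 1) a (x \<omega>) m)) \<alpha> (-\<beta>) (\<sigma> * Sc (k-1-m) powr (1/\<alpha>)) (ln (A (k-1-m)))"
    if "P m" "m < k" for m
  proof -
    obtain c d where c: "\<forall>i\<in>{k-1-m..<k}. c i < 0"
      and f: "\<forall>\<omega>\<in>space M. ln (Zrec k (\<lambda>_. 1) a (x \<omega>) m) = d + (\<Sum>i\<in>{k-1-m..<k}. c i * Y i \<omega>)"
      and l: "d + \<mu> * (\<Sum>i\<in>{k-1-m..<k}. c i) = ln (A (k-1-m))"
      and s: "(\<Sum>i\<in>{k-1-m..<k}. \<bar>c i\<bar> powr \<alpha>) = Sc (k-1-m)"
      using \<open>P m\<close> unfolding P_def by blast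
    have "has_stable_law M (\<lambda>\<omega>. ln (Zrec k (\<lambda>_. 1) a (x \<omega>) m)) \<alpha> (-\<beta>) (\<sigma> * (\<Sum>i\<in>{k-1-m..<k}. \<bar>c i\<bar> powr \<alpha>) powr (1/\<alpha>)) (d + \<mu> * (\<Sum>i\<in>{k-1-m..<k}. c i))"
      using ps _ _ indep_vars_subset[OF ind] law par a1 c f by (rule lin_law) (use \<open>m < k\<close> in auto)
    then show ?thesis using l s by simp
  qed
  have PP: "P m" if "m < k" for m
    using that
  proof (induction m)
    case 0
    show ?case unfolding P_def
    proof (intro exI[of _ "\<lambda>_. -1"] exI[of _ 0] conjI)
      have e: "{k - 1 - 0..<k} = {k-1}" using k1 by auto
      show "\<forall>\<omega>\<in>space M. ln (Zrec k (\<lambda>_. 1) a (x \<omega>) 0) = 0 + (\<Sum>i\<in>{k - 1 - 0..<k}. - 1 * Y i \<omega>)"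
      proof
        fix \<omega> assume w: "\<omega> \<in> space M"
        have "0 < x \<omega> k" using xp w by auto
        moreover have "ln (x \<omega> k) = Y (k - 1) \<omega>" using lnx[OF w k1] .
        ultimately show "ln (Zrec k (\<lambda>_. 1) a (x \<omega>) 0) = 0 + (\<Sum>i\<in>{k - 1 - 0..<k}. - 1 * Y i \<omega>)"
          unfolding e by (simp add: ln_div)
      qed
      show "0 + \<mu> * (\<Sum>i\<in>{k - 1 - 0..<k}. - 1) = ln (A (k - 1 - 0))"
        unfolding e A_def using k1 by (simp add: q_def)
      show "(\<Sum>i\<in>{k - 1 - 0..<k}. \<bar>- 1::real\<bar> powr \<alpha>) = Sc (k - 1 - 0)"
        unfolding e Sc_def using k1 q0 by (simp add: geo_pos)
    qed auto
  next
    case (Suc m)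
    define j where "j = k - 1 - m"
    have j: "1 \<le> j" "j \<le> k - 1" "k - 1 - Suc m = j - 1" "k - 1 - j = m" using Suc.prems unfolding j_def by auto
    have Pm: "P m" using Suc by auto
    obtain c d where c: "\<forall>i\<in>{j..<k}. c i < 0"
      and f: "\<forall>\<omega>\<in>space M. ln (Zrec k (\<lambda>_. 1) a (x \<omega>) m) = d + (\<Sum>i\<in>{j..<k}. c i * Y i \<omega>)"
      and l: "d + \<mu> * (\<Sum>i\<in>{j..<k}. c i) = ln (A j)"
      and s: "(\<Sum>i\<in>{j..<k}. \<bar>c i\<bar> powr \<alpha>) = Sc j"
      using Pm unfolding P_def j_def by blast
    have lj: "has_stable_law M (\<lambda>\<omega>. ln (Zrec k (\<lambda>_. 1) a (x \<omega>) m)) \<alpha> (-\<beta>) (\<sigma> * Sc j powr (1/\<alpha>)) (ln (A j))"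
      using lawP[OF Pm] Suc.prems unfolding j_def by simp
    obtain \<alpha>' \<beta>' \<sigma>' where "has_stable_law M (\<lambda>\<omega>. ln (Z_star k (\<lambda>_. 1) a (returns X real \<omega>) j)) \<alpha>' \<beta>' \<sigma>' (ln (a j))"
      and ajp: "0 < a j"
    proof -
      have "j \<in> {1..k-1}" using j(1,2) by simp
      from a_choice[rule_format, OF this] show thesis using that by blast
    qed
    then have lj': "has_stable_law M (\<lambda>\<omega>. ln (Zrec k (\<lambda>_. 1) a (x \<omega>) m)) \<alpha>' \<beta>' \<sigma>' (ln (a j))"
      unfolding Z_star_def x_def j(4) by blast
    have Ajp: "0 < A j" unfolding A_def using q0 j by (simp add: geo_pos)
    have "ln (A j) = ln (a j)" by (rule stable_loc_unique[OF lj lj' a1])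
    then have aj: "a j = A j" using Ajp ajp by simp
    define b where "b = A j / (A j + 1)"
    have bp: "0 < b" unfolding b_def using Ajp by simp
    have ins: "{j - 1..<k} = insert (j - 1) {j..<k}" "j - 1 \<notin> {j..<k}" using j by auto
    define c' where "c' = (\<lambda>i. if i = j - 1 then -1 else b * c i)"
    define d' where "d' = ln (A j + 1) + b * (d - ln (A j))"
    have sc': "(\<Sum>i\<in>{j..<k}. c' i * Y i \<omega>) = b * (\<Sum>i\<in>{j..<k}. c i * Y i \<omega>)" for \<omega>
      unfolding sum_distrib_left c'_def using ins(2) by (intro sum.cong) auto
    have sc2: "(\<Sum>i\<in>{j..<k}. c' i) = b * (\<Sum>i\<in>{j..<k}. c i)"
      unfolding sum_distrib_left c'_def using ins(2) by (intro sum.cong) auto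
    have A1: "A (j - 1) = q * (A j + 1)"
    proof -
      have "k - (j - 1) = Suc (k - j)" using j by auto
      then show ?thesis unfolding A_def by (simp add: algebra_simps)
    qed
    show ?case unfolding P_def j(3)
    proof (intro exI[of _ c'] exI[of _ d'] conjI)
      show "\<forall>i\<in>{j - 1..<k}. c' i < 0" unfolding ins c'_def using c bp by (auto simp: mult_pos_neg)
      show "\<forall>\<omega>\<in>space M. ln (Zrec k (\<lambda>_. 1) a (x \<omega>) (Suc m)) = d' + (\<Sum>i\<in>{j - 1..<k}. c' i * Y i \<omega>)"
      proof
        fix \<omega> assume w: "\<omega> \<in> space M"
        have Zp: "0 < Zrec k (\<lambda>_. 1) a (x \<omega>) m" using ZWm[OF w] Suc.prems by auto
        have "ln (Zrec k (\<lambda>_. 1) a (x \<omega>) (Suc m)) = ln (a j + 1) + (a j / (a j + 1)) * (ln (Zrec k (\<lambda>_. 1) a (x \<omega>) m) - ln (a j)) - ln (x \<omega> j)"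
          by (rule ln_step[OF xp[OF w] ajp Zp j_def])
        also have "\<dots> = ln (A j + 1) + b * (d + (\<Sum>i\<in>{j..<k}. c i * Y i \<omega>) - ln (A j)) - Y (j - 1) \<omega>"
          using f w lnx[OF w j(1)] unfolding aj b_def by simp
        also have "\<dots> = d' + (\<Sum>i\<in>{j - 1..<k}. c' i * Y i \<omega>)"
          unfolding ins sum.insert[OF finite_atLeastLessThan ins(2)] sc' d'_def
          by (simp add: c'_def algebra_simps)
        finally show "ln (Zrec k (\<lambda>_. 1) a (x \<omega>) (Suc m)) = d' + (\<Sum>i\<in>{j - 1..<k}. c' i * Y i \<omega>)" .
      qed
      show "d' + \<mu> * (\<Sum>i\<in>{j - 1..<k}. c' i) = ln (A (j - 1))"
      proof -
        have "d' + \<mu> * (\<Sum>i\<in>{j - 1..<k}. c' i) = ln (A j + 1) + b * (d + \<mu> * (\<Sum>i\<in>{j..<k}. c i) - ln (A j)) - \<mu>"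
          unfolding ins sum.insert[OF finite_atLeastLessThan ins(2)] sc2 d'_def
          by (simp add: c'_def algebra_simps)
        also have "\<dots> = ln (A j + 1) - \<mu>" using l by simp
        also have "\<dots> = ln (A (j - 1))" unfolding A1 using q0 Ajp by (simp add: ln_mult q_def)
        finally show ?thesis .
      qed
      show "(\<Sum>i\<in>{j - 1..<k}. \<bar>c' i\<bar> powr \<alpha>) = Sc (j - 1)"
      proof -
        have gj: "0 < geo q (k - j)" using q0 j by (simp add: geo_pos)
        have kj: "k - (j - 1) = Suc (k - j)" using j by auto
        have "(\<Sum>i\<in>{j - 1..<k}. \<bar>c' i\<bar> powr \<alpha>) = 1 + (\<Sum>i\<in>{j..<k}. b powr \<alpha> * \<bar>c i\<bar> powr \<alpha>)"
          unfolding ins sum.insert[OF finite_atLeastLessThan ins(2)] using ins(2) bp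
          by (auto simp: c'_def abs_mult powr_mult intro!: sum.cong)
        also have "\<dots> = 1 + b powr \<alpha> * Sc j" using s by (simp add: sum_distrib_left[symmetric])
        also have "\<dots> = Sc (j - 1)"
        proof -
          have t: "q ^ (i - (j - 1)) * geo q (k - i) / geo q (k - (j - 1)) = b * (q ^ (i - j) * geo q (k - i) / geo q (k - j))"
            if "i \<in> {j..<k}" for i
          proof -
            have "i - (j - 1) = Suc (i - j)" using that j by auto
            moreover have "0 < 1 + q * geo q (k - j)" using q0 gj by (simp add: add_pos_pos)
            ultimately show ?thesis unfolding kj b_def A_def using gj
              using aux1[of "geo q (k - j)" q "q ^ (i - j)" "geo q (k - i)"] by (simp add: mult.assoc)
          qed
          have n: "0 \<le> q ^ (i - j) * geo q (k - i) / geo q (k - j)" for i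
            using q0 gj by (simp add: geo_nonneg)
          have g1: "0 < geo q (k - (j - 1))" using q0 j by (simp add: geo_pos)
          have "Sc (j - 1) = 1 + (\<Sum>i\<in>{j..<k}. (b * (q ^ (i - j) * geo q (k - i) / geo q (k - j))) powr \<alpha>)"
            unfolding Sc_def ins sum.insert[OF finite_atLeastLessThan ins(2)] using g1
            by (simp del: One_nat_def) (intro sum.cong refl, simp only: t, simp)
          also have "\<dots> = 1 + b powr \<alpha> * Sc j"
            unfolding Sc_def sum_distrib_left using bp n
            by (intro arg_cong[where f="\<lambda>z. 1 + z"] sum.cong refl) (simp add: powr_mult[symmetric])
          finally show ?thesis by simp
        qed
        finally show ?thesis .
      qed
    qed
    
  qed
  have L0: "has_stable_law M (\<lambda>\<omega>. ln (Zrec k (\<lambda>_. 1) a (x \<omega>) (k - 1))) \<alpha> (-\<beta>) (\<sigma> * Sc 0 powr (1/\<alpha>)) (ln (A 0))"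
    using lawP[OF PP, of "k - 1"] k1 by simp
  have eqf: "(\<lambda>\<omega>. ln (Z_star k (\<lambda>_. 1) a (returns X real \<omega>) 0)) = (\<lambda>\<omega>. ln (Zrec k (\<lambda>_. 1) a (x \<omega>) (k - 1)))"
    unfolding Z_star_def x_def by simp
  have qe: "exp (-\<mu> * real n) = q ^ n" for n
    unfolding q_def by (simp add: exp_of_nat_mult[symmetric] mult.commute)
  have gk: "0 < geo q k" using q0 k1 by (simp add: geo_pos)
  have term0: "q ^ i * geo q (k - i) / geo q k = 1 - (exp (-\<mu> * real i) - 1) / (exp (-\<mu> * real k) - 1)"
    if "i \<le> k" for i
  proof -
    have "geo q k = geo q i + q ^ i * geo q (k - i)" using geo_add[of q i "k - i"] that by simp
    then have "q ^ i * geo q (k - i) / geo q k = 1 - geo q i / geo q k" using gk by (simp add: field_simps)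
    also have "geo q i / geo q k = (q ^ i - 1) / (q ^ k - 1)"
    proof -
      have "q - 1 \<noteq> 0" using q1 by simp
      then show ?thesis unfolding geo_closed[OF q1] by (rule div_cancel_aux)
    qed
    finally show ?thesis unfolding qe .
  qed
  define S' where "S' = (\<Sum>j=1..k-1. (1 - (exp (-\<mu> * real j) - 1) / (exp (-\<mu> * real k) - 1)) powr \<alpha>)"
  have S'nn: "0 \<le> S'" unfolding S'_def by (intro sum_nonneg) simp
  have ins0: "{0..<k} = insert 0 {1..k-1}" "0 \<notin> {1..k-1::nat}" using k1 by auto
  have Sc0: "Sc 0 = 1 + S'"
  proof -
    have "Sc 0 = (\<Sum>i\<in>{0..<k}. (1 - (exp (-\<mu> * real i) - 1) / (exp (-\<mu> * real k) - 1)) powr \<alpha>)"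
      unfolding Sc_def by (intro sum.cong refl) (simp add: term0)
    also have "\<dots> = 1 + S'" unfolding ins0 sum.insert[OF finite_atLeastAtMost ins0(2)] S'_def by simp
    finally show ?thesis .
  qed
  have sc: "\<sigma> * Sc 0 powr (1/\<alpha>) = (\<sigma> powr \<alpha> * (1 + S')) powr (1 / \<alpha>)"
    unfolding Sc0 using par S'nn by (simp add: powr_mult powr_powr)
  have loc: "ln (A 0) = -\<mu> + ln ((exp (-\<mu> * real k) - 1) / (exp (-\<mu>) - 1))"
  proof -
    have "A 0 = q * geo q k" unfolding A_def by simp
    then have "ln (A 0) = ln q + ln (geo q k)" using q0 gk by (simp add: ln_mult)
    also have "geo q k = (exp (-\<mu> * real k) - 1) / (exp (-\<mu>) - 1)"
      unfolding geo_closed[OF q1] qe by (simp add: q_def)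
    finally show ?thesis by (simp add: q_def)
  qed
  show ?thesis using part1 L0 unfolding eqf sc loc S'_def by simp
qed

end
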